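(* Let $n\ge 2$ and let $\triangle\subset\mathbb{R}^{n-1}$ be a non-degenerate simplex with $n$ vertices and inradius $r$, and let $k\in[n]$. Then every closed Euclidean ball that intersects the affine span of each $(k-1)$-dimensional face of $\triangle$ has radius at least $\lambda_n r$, where \[ \lambda_n=\sqrt{\frac{(n-1)(n-k)}{k}}. \]
   Context: A $(k-1)$-dimensional face of $\triangle$ is the convex hull of $k$ of its vertices. The inradius is the radius of the largest ball contained in $\triangle$. *)

theory Defs
  imports "HOL-Analysis.Analysis"
begin

definition inradius :: "'a::euclidean_space set \<Rightarrow> real" where
  "inradius S = Sup {r. r \<ge> 0 \<and> (\<exists>c. cball c r \<subseteq> S)}"

end

theory Submission
  imports Defs
begin

definition edgecond :: "'a::euclidean_space set \<Rightarrow> ('a \<Rightarrow> 'a) \<Rightarrow> bool" where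
  "edgecond V h \<longleftrightarrow> (\<forall>v\<in>V. \<forall>u\<in>V. \<forall>w\<in>V.
      h v \<bullet> (u - w) = (if v = u then 1 else 0) - (if v = w then 1 else 0))"

lemma edgecondD:
  "edgecond V h \<Longrightarrow> v\<in>V \<Longrightarrow> u\<in>V \<Longrightarrow> w\<in>V \<Longrightarrow>
   h v \<bullet> (u - w) = (if v = u then 1 else 0) - (if v = w then 1 else 0)"
  by (simp add: edgecond_def)

lemma lam_zero:
  assumes "edgecond V h" "j \<in> V" "F \<subseteq> V - {j}" "y \<in> affine hull F"
  shows "h j \<bullet> (y - j) = -1"
proof -
  have "F \<subseteq> {x. h j \<bullet> x = h j \<bullet> j - 1}"
  proof
    fix u assume "u \<in> F"
    then have "u \<in> V" "u \<noteq> j" using assms(3) by auto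
    then have "h j \<bullet> (u - j) = -1" using edgecondD[OF assms(1) assms(2) \<open>u\<in>V\<close> assms(2)] by simp
    then show "u \<in> {x. h j \<bullet> x = h j \<bullet> j - 1}" by (simp add: inner_diff_right)
  qed
  then have "affine hull F \<subseteq> {x. h j \<bullet> x = h j \<bullet> j - 1}"
    by (rule hull_minimal) (rule affine_hyperplane)
  then show ?thesis using assms(4) by (auto simp: inner_diff_right)
qed

lemma lam_sum:
  assumes "finite V" "V \<noteq> {}" "edgecond V h" "sum h V = 0"
  shows "(\<Sum>j\<in>V. h j \<bullet> (c - j) + 1) = 1"
proof -
  obtain v0 where v0: "v0 \<in> V" using assms(2) by auto
  have eq: "h j \<bullet> (c - j) + 1 = h j \<bullet> (c - v0) + (if j = v0 then 1 else 0)" if "j \<in> V" for j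
  proof -
    have "h j \<bullet> (j - v0) = 1 - (if j = v0 then 1 else 0)"
      using edgecondD[OF assms(3) that that v0] by simp
    moreover have "h j \<bullet> (c - j) = h j \<bullet> (c - v0) - h j \<bullet> (j - v0)"
      by (simp add: inner_diff_right)
    ultimately show ?thesis by simp
  qed
  have "(\<Sum>j\<in>V. h j \<bullet> (c - j) + 1) = (\<Sum>j\<in>V. h j \<bullet> (c - v0) + (if j = v0 then 1 else 0))"
    by (rule sum.cong) (auto simp: eq)
  also have "\<dots> = (\<Sum>j\<in>V. h j \<bullet> (c - v0)) + (\<Sum>j\<in>V. (if j = v0 then 1 else 0))"
    by (simp add: sum.distrib)
  also have "(\<Sum>j\<in>V. h j \<bullet> (c - v0)) = sum h V \<bullet> (c - v0)" by (simp add: inner_sum_left)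
  also have "(\<Sum>j\<in>V. (if j = v0 then 1 else 0::real)) = 1" using assms(1) v0 by simp
  finally show ?thesis using assms(4) by simp
qed

lemma lam_nonneg:
  assumes "edgecond V h" "j \<in> V" "x \<in> convex hull V"
  shows "h j \<bullet> (x - j) + 1 \<ge> 0"
proof -
  have "V \<subseteq> {x. h j \<bullet> x \<ge> h j \<bullet> j - 1}"
  proof
    fix u assume "u \<in> V"
    have "h j \<bullet> (u - j) = (if j = u then 1 else 0) - 1"
      using edgecondD[OF assms(1) assms(2) \<open>u\<in>V\<close> assms(2)] by simp
    then have "h j \<bullet> (u - j) \<ge> -1" by simp
    then show "u \<in> {x. h j \<bullet> x \<ge> h j \<bullet> j - 1}" by (simp add: inner_diff_right)
  qed
  then have "convex hull V \<subseteq> {x. h j \<bullet> x \<ge> h j \<bullet> j - 1}"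
    by (rule hull_minimal) (rule convex_halfspace_ge)
  then show ?thesis using assms(3) by (auto simp: inner_diff_right)
qed

lemma ball_bound:
  assumes "finite V" "V \<noteq> {}" "edgecond V h" "sum h V = 0" "cball x r \<subseteq> convex hull V" "r \<ge> 0"
  shows "r * (\<Sum>j\<in>V. norm (h j)) \<le> 1"
proof -
  have key: "r * norm (h j) \<le> h j \<bullet> (x - j) + 1" if j: "j \<in> V" for j
  proof (cases "h j = 0")
    case True
    have "x \<in> convex hull V" using assms(5,6) by auto
    then show ?thesis using lam_nonneg[OF assms(3) j] True by simp
  next
    case False
    define z where "z = x - (r / norm (h j)) *\<^sub>R h j"
    have "dist x z = r" using False assms(6) by (simp add: z_def dist_norm)
    then have "z \<in> convex hull V" using assms(5) by auto
    then have "h j \<bullet> (z - j) + 1 \<ge> 0" by (rule lam_nonneg[OF assms(3) j])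
    moreover have "h j \<bullet> (z - j) = h j \<bullet> (x - j) - r * norm (h j)"
    proof -
      have "z - j = (x - j) - (r / norm (h j)) *\<^sub>R h j" by (simp add: z_def)
      then have "h j \<bullet> (z - j) = h j \<bullet> (x - j) - (r / norm (h j)) * (h j \<bullet> h j)"
        by (simp add: inner_diff_right)
      also have "h j \<bullet> h j = norm (h j) * norm (h j)" by (simp add: dot_square_norm power2_eq_square)
      finally show ?thesis using False by simp
    qed
    ultimately show ?thesis by simp
  qed
  have "r * (\<Sum>j\<in>V. norm (h j)) = (\<Sum>j\<in>V. r * norm (h j))" by (simp add: sum_distrib_left)
  also have "\<dots> \<le> (\<Sum>j\<in>V. h j \<bullet> (x - j) + 1)" by (rule sum_mono) (rule key)
  also have "\<dots> = 1" by (rule lam_sum[OF assms(1-4)])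
  finally show ?thesis .
qed

lemma h_exists:
  fixes V :: "'a::euclidean_space set"
  assumes "finite V" "\<not> affine_dependent V" "v0 \<in> V"
  shows "\<exists>h. edgecond V h \<and> sum h V = 0"
proof -
  let ?B = "(\<lambda>x. - v0 + x) ` (V - {v0})"
  have ind: "independent ?B" using affine_dependent_iff_dependent2[OF assms(3)] assms(2) by blast
  have "\<forall>j\<in>V - {v0}. \<exists>gj. \<forall>u\<in>V. gj \<bullet> (u - v0) = (if u = j then 1 else 0)"
  proof
    fix j assume j: "j \<in> V - {v0}"
    obtain f where f: "linear f" "\<forall>b\<in>?B. f b = (if b = - v0 + j then 1 else (0::real))"
      using linear_independent_extend[OF ind, of "\<lambda>b. if b = - v0 + j then 1 else (0::real)"] by blast
    define gj where "gj = adjoint f 1"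
    have "gj \<bullet> (u - v0) = (if u = j then 1 else 0)" if u: "u \<in> V" for u
    proof (cases "u = v0")
      case True then show ?thesis using j by auto
    next
      case False
      have "gj \<bullet> (u - v0) = f (u - v0) \<bullet> 1"
        unfolding gj_def using adjoint_works[OF f(1), of "u - v0" 1] by (simp add: inner_commute)
      also have "f (u - v0) = f (- v0 + u)" by (simp add: algebra_simps)
      also have "\<dots> = (if - v0 + u = - v0 + j then 1 else 0)"
      proof -
        have "- v0 + u \<in> ?B" using u False by auto
        then show ?thesis using f(2) by blast
      qed
      finally show ?thesis by simp
    qed
    then show "\<exists>gj. \<forall>u\<in>V. gj \<bullet> (u - v0) = (if u = j then 1 else 0)" by blast
  qed
  from bchoice[OF this] obtain g where g: "\<forall>j\<in>V - {v0}. \<forall>u\<in>V. g j \<bullet> (u - v0) = (if u = j then 1 else 0)"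
    ..
  define h where "h = (\<lambda>j. if j = v0 then - (\<Sum>i\<in>V - {v0}. g i) else g j)"
  have base: "h v \<bullet> (u - v0) = (if v = u then 1 else 0) - (if v = v0 then 1 else 0)"
    if v: "v \<in> V" and u: "u \<in> V" for v u
  proof (cases "v = v0")
    case True
    have "h v \<bullet> (u - v0) = - (\<Sum>i\<in>V - {v0}. g i \<bullet> (u - v0))"
      using True by (simp add: h_def inner_sum_left)
    also have "(\<Sum>i\<in>V - {v0}. g i \<bullet> (u - v0)) = (\<Sum>i\<in>V - {v0}. (if u = i then 1 else 0))"
      by (rule sum.cong) (use g u in auto)
    also have "\<dots> = (if u \<noteq> v0 then 1 else 0)" using assms(1) u by simp
    finally show ?thesis using True by auto
  next
    case False
    then show ?thesis using g v u by (auto simp: h_def)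
  qed
  have "edgecond V h"
    unfolding edgecond_def
  proof (intro ballI)
    fix v u w assume "v \<in> V" "u \<in> V" "w \<in> V"
    have "h v \<bullet> (u - w) = h v \<bullet> (u - v0) - h v \<bullet> (w - v0)" by (simp add: inner_diff_right)
    then show "h v \<bullet> (u - w) = (if v = u then 1 else 0) - (if v = w then 1 else 0)"
      using base[OF \<open>v\<in>V\<close> \<open>u\<in>V\<close>] base[OF \<open>v\<in>V\<close> \<open>w\<in>V\<close>] by simp
  qed
  moreover have "sum h V = 0"
  proof -
    have "sum h V = h v0 + sum h (V - {v0})" using assms(1,3) by (simp add: sum.remove)
    also have "sum h (V - {v0}) = (\<Sum>i\<in>V - {v0}. g i)" by (rule sum.cong) (auto simp: h_def)
    finally show ?thesis by (simp add: h_def)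
  qed
  ultimately show ?thesis by blast
qed

lemma wcs:
  fixes x p :: "'b \<Rightarrow> real"
  assumes "\<forall>i\<in>I. p i > 0"
  shows "(\<Sum>i\<in>I. x i)\<^sup>2 \<le> (\<Sum>i\<in>I. p i) * (\<Sum>i\<in>I. (x i)\<^sup>2 / p i)"
proof -
  have e1: "(\<Sum>i\<in>I. x i) = (\<Sum>i\<in>I. sqrt (p i) * (x i / sqrt (p i)))"
    by (rule sum.cong) (use assms in auto)
  have e2: "(\<Sum>i\<in>I. (sqrt (p i))\<^sup>2) = (\<Sum>i\<in>I. p i)"
    by (rule sum.cong) (use assms in \<open>auto simp: less_imp_le\<close>)
  have e3: "(\<Sum>i\<in>I. (x i / sqrt (p i))\<^sup>2) = (\<Sum>i\<in>I. (x i)\<^sup>2 / p i)"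
    by (rule sum.cong) (use assms in \<open>auto simp: power_divide less_imp_le\<close>)
  show ?thesis
    using Cauchy_Schwarz_ineq_sum[of "\<lambda>i. sqrt (p i)" "\<lambda>i. x i / sqrt (p i)" I]
    unfolding e1[symmetric] e2 e3 .
qed

lemma tangent:
  fixes x a :: real
  assumes "x > 0" "a > 0"
  shows "3 / a\<^sup>2 - 2 * x / a ^ 3 \<le> 1 / x\<^sup>2"
proof -
  have p: "a ^ 3 - (3 * a - 2 * x) * x\<^sup>2 = (a - x)\<^sup>2 * (a + 2 * x)"
    by (simp add: power2_eq_square power3_eq_cube algebra_simps)
  have "(a - x)\<^sup>2 * (a + 2 * x) \<ge> 0" using assms by simp
  then have q: "(3 * a - 2 * x) * x\<^sup>2 \<le> a ^ 3" using p by linarith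
  have "3 / a\<^sup>2 - 2 * x / a ^ 3 = (3 * a - 2 * x) / a ^ 3"
    using assms by (simp add: field_simps power2_eq_square power3_eq_cube)
  also have "\<dots> \<le> 1 / x\<^sup>2"
    using q assms by (simp add: field_simps)
  finally show ?thesis .
qed

lemma lam_sq:
  fixes l t T :: real
  assumes "t > 0" "T > 0"
  shows "2 * l / T - t / T\<^sup>2 \<le> l\<^sup>2 / t"
proof -
  have "0 \<le> (l - t / T)\<^sup>2 / t" using assms by simp
  also have "(l - t / T)\<^sup>2 / t = l\<^sup>2 / t - 2 * l / T + t / T\<^sup>2"
    using assms by (simp add: field_simps power2_eq_square)
  finally show ?thesis by simp
qed

lemma combine:
  fixes t lam TT :: "'b \<Rightarrow> real"
  assumes fin: "finite V" and card: "card V = N" and N3: "N \<ge> 3"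
    and tpos: "\<forall>j\<in>V. t j > 0" and TTpos: "\<forall>j\<in>V. TT j > 0"
    and lsum: "sum lam V = 1"
    and Rj: "\<forall>j\<in>V. (lam j)\<^sup>2 / (t j)\<^sup>2 + \<alpha> / (TT j)\<^sup>2 \<le> R"
    and Sb: "(\<Sum>j\<in>V. t j * TT j)\<^sup>2 \<le> (sum t V) ^ 4 * (real N - 2) / real N"
    and al: "\<alpha> \<ge> 0"
  shows "1 + \<alpha> * real N / (real N - 2) \<le> R * (sum t V)\<^sup>2"
proof -
  define T where "T = sum t V"
  define S where "S = (\<Sum>j\<in>V. t j * TT j)"
  have Vne: "V \<noteq> {}" using card N3 by auto
  have Tpos: "T > 0" unfolding T_def using fin Vne tpos by (intro sum_pos) auto
  have Spos: "S > 0" unfolding S_def using fin Vne tpos TTpos by (intro sum_pos) auto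
  have RT: "R * T \<ge> (\<Sum>j\<in>V. (lam j)\<^sup>2 / t j) + \<alpha> * (\<Sum>j\<in>V. t j / (TT j)\<^sup>2)"
  proof -
    have "(\<Sum>j\<in>V. (lam j)\<^sup>2 / t j) + \<alpha> * (\<Sum>j\<in>V. t j / (TT j)\<^sup>2)
        = (\<Sum>j\<in>V. t j * ((lam j)\<^sup>2 / (t j)\<^sup>2 + \<alpha> / (TT j)\<^sup>2))"
      unfolding sum_distrib_left sum.distrib[symmetric]
      by (rule sum.cong) (use tpos in \<open>auto simp: field_simps power2_eq_square\<close>)
    also have "\<dots> \<le> (\<Sum>j\<in>V. t j * R)"
      by (rule sum_mono) (use tpos Rj in \<open>auto intro: mult_left_mono\<close>)
    also have "\<dots> = T * R" by (simp add: T_def sum_distrib_right)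
    also have "\<dots> = R * T" by simp
    finally show ?thesis .
  qed
  have L: "(\<Sum>j\<in>V. (lam j)\<^sup>2 / t j) \<ge> 1 / T"
  proof -
    have "(\<Sum>j\<in>V. 2 * lam j / T - t j / T\<^sup>2) \<le> (\<Sum>j\<in>V. (lam j)\<^sup>2 / t j)"
      by (rule sum_mono) (use tpos Tpos lam_sq in auto)
    moreover have "(\<Sum>j\<in>V. 2 * lam j / T - t j / T\<^sup>2) = 2 * (sum lam V) / T - T / T\<^sup>2"
      by (simp add: sum_subtractf sum_divide_distrib[symmetric] sum_distrib_left[symmetric] T_def)
    moreover have "2 * (sum lam V) / T - T / T\<^sup>2 = 1 / T"
      using Tpos lsum by (simp add: field_simps power2_eq_square)
    ultimately show ?thesis by simp
  qed
  define a where "a = S / T"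
  have apos: "a > 0" using Spos Tpos by (simp add: a_def)
  have M: "(\<Sum>j\<in>V. t j / (TT j)\<^sup>2) \<ge> T ^ 3 / S\<^sup>2"
  proof -
    have "(\<Sum>j\<in>V. t j * (3 / a\<^sup>2 - 2 * TT j / a ^ 3)) \<le> (\<Sum>j\<in>V. t j * (1 / (TT j)\<^sup>2))"
    proof (rule sum_mono)
      fix j assume j: "j \<in> V"
      then have "3 / a\<^sup>2 - 2 * TT j / a ^ 3 \<le> 1 / (TT j)\<^sup>2" using tangent TTpos apos by auto
      then show "t j * (3 / a\<^sup>2 - 2 * TT j / a ^ 3) \<le> t j * (1 / (TT j)\<^sup>2)"
        using tpos j by (intro mult_left_mono) auto
    qed
    moreover have "(\<Sum>j\<in>V. t j * (3 / a\<^sup>2 - 2 * TT j / a ^ 3)) = 3 * T / a\<^sup>2 - 2 * S / a ^ 3"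
    proof -
      have "(\<Sum>j\<in>V. t j * (3 / a\<^sup>2 - 2 * TT j / a ^ 3))
          = (\<Sum>j\<in>V. (3 / a\<^sup>2) * t j - (2 / a ^ 3) * (t j * TT j))"
        by (rule sum.cong) (auto simp: algebra_simps)
      also have "\<dots> = (3 / a\<^sup>2) * T - (2 / a ^ 3) * S"
        by (simp add: sum_subtractf sum_distrib_left T_def S_def)
      finally show ?thesis by simp
    qed
    moreover have "3 * T / a\<^sup>2 - 2 * S / a ^ 3 = T ^ 3 / S\<^sup>2"
      using Spos Tpos by (simp add: a_def field_simps power2_eq_square power3_eq_cube)
    ultimately show ?thesis by simp
  qed
  have N2: "real N - 2 > 0" using N3 by simp
  have M2: "T ^ 3 / S\<^sup>2 \<ge> real N / ((real N - 2) * T)"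
  proof -
    have "S\<^sup>2 \<le> T ^ 4 * (real N - 2) / real N" using Sb by (simp add: S_def T_def)
    then have "S\<^sup>2 * real N \<le> T ^ 4 * (real N - 2)" using N3 by (simp add: field_simps)
    moreover have T4: "T ^ 4 = T * (T * (T * T))" by (simp add: eval_nat_numeral)
    ultimately show ?thesis using Spos Tpos N2 N3
      by (simp add: field_simps power2_eq_square power3_eq_cube)
  qed
  have "R * T \<ge> 1 / T + \<alpha> * (real N / ((real N - 2) * T))"
    using RT L M M2 al by (meson add_mono mult_left_mono order_trans)
  then have "R * T * T \<ge> (1 / T + \<alpha> * (real N / ((real N - 2) * T))) * T"
    using Tpos by (simp add: mult_right_mono)
  moreover have "(1 / T + \<alpha> * (real N / ((real N - 2) * T))) * T = 1 + \<alpha> * real N / (real N - 2)"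
    using Tpos N2 by (simp add: field_simps)
  ultimately show ?thesis by (simp add: T_def power2_eq_square mult.assoc)
qed

lemma pairs:
  fixes h :: "'b \<Rightarrow> 'a::euclidean_space"
  assumes fin: "finite V" and card: "card V = N" and N2: "N \<ge> 2"
    and hnz: "\<forall>j\<in>V. h j \<noteq> 0" and hs: "sum h V = 0"
  shows "(\<Sum>j\<in>V. \<Sum>i\<in>V-{j}. norm (h j) * norm (h i - ((h i \<bullet> h j) / (norm (h j))\<^sup>2) *\<^sub>R h j))\<^sup>2
         \<le> (\<Sum>j\<in>V. norm (h j)) ^ 4 * (real N - 2) / real N"
proof -
  define t where "t j = norm (h j)" for j
  define T where "T = sum t V"
  define s2 where "s2 = (\<Sum>j\<in>V. (t j)\<^sup>2)"
  define PS where "PS = Sigma V (\<lambda>j. V - {j})"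
  define A where "A j i = norm (h j) * norm (h i - ((h i \<bullet> h j) / (norm (h j))\<^sup>2) *\<^sub>R h j)" for j i
  define e where "e j i = h i \<bullet> h j" for j i
  define q where "q j i = t j * t i" for j i
  have finPS: "finite PS" using fin by (simp add: PS_def)
  have tpos: "\<forall>j\<in>V. t j > 0" using hnz by (simp add: t_def)
  have qpos: "\<forall>p\<in>PS. case_prod q p > 0" using tpos by (auto simp: PS_def q_def)
  have LHS: "(\<Sum>j\<in>V. \<Sum>i\<in>V-{j}. norm (h j) * norm (h i - ((h i \<bullet> h j) / (norm (h j))\<^sup>2) *\<^sub>R h j))
      = (\<Sum>(j,i)\<in>PS. A j i)"
    unfolding PS_def A_def by (rule sum.Sigma) (use fin in auto)
  have dbl: "(\<Sum>(j,i)\<in>PS. f j i) = (\<Sum>j\<in>V. (\<Sum>i\<in>V. f j i) - f j j)" for f :: "'b \<Rightarrow> 'b \<Rightarrow> real"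
  proof -
    have "(\<Sum>(j,i)\<in>PS. f j i) = (\<Sum>j\<in>V. \<Sum>i\<in>V-{j}. f j i)"
      unfolding PS_def by (rule sum.Sigma[symmetric]) (use fin in auto)
    also have "\<dots> = (\<Sum>j\<in>V. (\<Sum>i\<in>V. f j i) - f j j)"
      by (rule sum.cong) (use fin in \<open>auto simp: sum_diff1\<close>)
    finally show ?thesis .
  qed
  have A2: "(A j i)\<^sup>2 = (q j i)\<^sup>2 - (e j i)\<^sup>2" if "j \<in> V" for j i
  proof -
    have tj: "t j > 0" using tpos that by auto
    have hh: "h j \<bullet> h j = (t j)\<^sup>2" by (simp add: t_def power2_norm_eq_inner)
    have ii: "h i \<bullet> h i = (t i)\<^sup>2" by (simp add: t_def power2_norm_eq_inner)
    define c where "c = (h i \<bullet> h j) / (t j)\<^sup>2"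
    have "(norm (h i - c *\<^sub>R h j))\<^sup>2 = (h i - c *\<^sub>R h j) \<bullet> (h i - c *\<^sub>R h j)"
      by (simp add: power2_norm_eq_inner)
    also have "\<dots> = h i \<bullet> h i - 2 * c * (h i \<bullet> h j) + c * c * (h j \<bullet> h j)"
      by (simp add: inner_diff_left inner_diff_right inner_commute algebra_simps)
    also have "\<dots> = (t i)\<^sup>2 - (e j i)\<^sup>2 / (t j)\<^sup>2"
      using tj unfolding hh ii c_def e_def by (simp add: field_simps power2_eq_square)
    finally have "(norm (h i - c *\<^sub>R h j))\<^sup>2 = (t i)\<^sup>2 - (e j i)\<^sup>2 / (t j)\<^sup>2" .
    then have "(A j i)\<^sup>2 = (t j)\<^sup>2 * ((t i)\<^sup>2 - (e j i)\<^sup>2 / (t j)\<^sup>2)"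
      by (simp add: A_def c_def t_def power_mult_distrib)
    also have "\<dots> = (q j i)\<^sup>2 - (e j i)\<^sup>2" using tj by (simp add: q_def field_simps power2_eq_square)
    finally show ?thesis .
  qed
  have sumq: "(\<Sum>(j,i)\<in>PS. q j i) = T\<^sup>2 - s2"
  proof -
    have "(\<Sum>(j,i)\<in>PS. q j i) = (\<Sum>j\<in>V. t j * T - (t j)\<^sup>2)"
      unfolding dbl by (simp add: q_def T_def sum_distrib_left power2_eq_square)
    also have "\<dots> = T\<^sup>2 - s2" by (simp add: sum_subtractf sum_distrib_right[symmetric] T_def s2_def power2_eq_square)
    finally show ?thesis .
  qed
  have sume: "(\<Sum>(j,i)\<in>PS. e j i) = - s2"
  proof -
    have "(\<Sum>(j,i)\<in>PS. e j i) = (\<Sum>j\<in>V. sum h V \<bullet> h j - (t j)\<^sup>2)"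
      unfolding dbl by (simp add: e_def inner_sum_left t_def power2_norm_eq_inner)
    also have "\<dots> = - s2" using hs by (simp add: s2_def sum_negf)
    finally show ?thesis .
  qed
  define Q where "Q = (\<Sum>(j,i)\<in>PS. q j i)"
  define E where "E = (\<Sum>p\<in>PS. (case_prod e p)\<^sup>2 / case_prod q p)"
  have CS1: "(\<Sum>p\<in>PS. case_prod A p)\<^sup>2 \<le> Q * (\<Sum>p\<in>PS. (case_prod A p)\<^sup>2 / case_prod q p)"
    unfolding Q_def by (rule wcs[OF qpos])
  have CS2: "(\<Sum>p\<in>PS. case_prod e p)\<^sup>2 \<le> Q * E"
    unfolding Q_def E_def by (rule wcs[OF qpos])
  have eqA: "(\<Sum>p\<in>PS. (case_prod A p)\<^sup>2 / case_prod q p) = Q - E"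
  proof -
    have "(\<Sum>p\<in>PS. (case_prod A p)\<^sup>2 / case_prod q p) = (\<Sum>p\<in>PS. case_prod q p - (case_prod e p)\<^sup>2 / case_prod q p)"
    proof (rule sum.cong)
      fix p assume p: "p \<in> PS"
      obtain j i where ji: "p = (j, i)" by (cases p)
      have j: "j \<in> V" using p ji by (auto simp: PS_def)
      have "q j i > 0" using qpos p ji by auto
      then show "(case_prod A p)\<^sup>2 / case_prod q p = case_prod q p - (case_prod e p)\<^sup>2 / case_prod q p"
        using A2[OF j, of i] ji by (simp add: field_simps power2_eq_square)
    qed simp
    also have "\<dots> = Q - E" by (simp add: sum_subtractf Q_def E_def)
    finally show ?thesis .
  qed
  have Qpos: "Q \<ge> 0" unfolding Q_def using qpos by (intro sum_nonneg) (auto simp: less_imp_le)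
  have step1: "(\<Sum>p\<in>PS. case_prod A p)\<^sup>2 \<le> Q\<^sup>2 - s2\<^sup>2"
  proof -
    have "s2\<^sup>2 \<le> Q * E" using CS2 sume by simp
    moreover have "(\<Sum>p\<in>PS. case_prod A p)\<^sup>2 \<le> Q * (Q - E)" using CS1 eqA by simp
    moreover have "Q * (Q - E) = Q\<^sup>2 - Q * E" by (simp add: algebra_simps power2_eq_square)
    ultimately show ?thesis by linarith
  qed
  have s2b: "T\<^sup>2 \<le> real N * s2"
  proof -
    have "(\<Sum>j\<in>V. t j)\<^sup>2 \<le> (\<Sum>j\<in>V. 1) * (\<Sum>j\<in>V. (t j)\<^sup>2 / 1)"
      by (rule wcs) simp
    then show ?thesis using card by (simp add: T_def s2_def)
  qed
  have "Q\<^sup>2 - s2\<^sup>2 = T ^ 4 - 2 * T\<^sup>2 * s2"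
    unfolding Q_def sumq by (simp add: power2_eq_square eval_nat_numeral algebra_simps)
  also have "\<dots> \<le> T ^ 4 * (real N - 2) / real N"
  proof -
    have Npos: "real N > 0" using N2 by simp
    have "2 * T\<^sup>2 * T\<^sup>2 \<le> 2 * T\<^sup>2 * (real N * s2)" using s2b by (simp add: mult_left_mono)
    then have "T ^ 4 * 2 \<le> real N * (2 * T\<^sup>2 * s2)" by (simp add: eval_nat_numeral algebra_simps)
    then show ?thesis using Npos by (simp add: field_simps)
  qed
  finally have "(\<Sum>p\<in>PS. case_prod A p)\<^sup>2 \<le> T ^ 4 * (real N - 2) / real N" using step1 by linarith
  then show ?thesis unfolding LHS by (simp add: T_def t_def)
qed

lemma facet_edge:
  assumes ec: "edgecond V h" and j: "j \<in> V"
  shows "edgecond (V - {j}) (\<lambda>i. h i - ((h i \<bullet> h j) / (norm (h j))\<^sup>2) *\<^sub>R h j)"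
  unfolding edgecond_def
proof (intro ballI)
  fix v u w assume v: "v \<in> V - {j}" and u: "u \<in> V - {j}" and w: "w \<in> V - {j}"
  have "h j \<bullet> (u - w) = 0" using edgecondD[OF ec j, of u w] u w by auto
  then have "(h v - ((h v \<bullet> h j) / (norm (h j))\<^sup>2) *\<^sub>R h j) \<bullet> (u - w) = h v \<bullet> (u - w)"
    by (simp add: inner_diff_left)
  also have "\<dots> = (if v = u then 1 else 0) - (if v = w then 1 else 0)"
    using edgecondD[OF ec] v u w by auto
  finally show "(h v - ((h v \<bullet> h j) / (norm (h j))\<^sup>2) *\<^sub>R h j) \<bullet> (u - w) =
      (if v = u then 1 else 0) - (if v = w then 1 else 0)" .
qed

lemma facet_sum:
  assumes fin: "finite V" and j: "j \<in> V" and hs: "sum h V = 0" and hj: "h j \<noteq> 0"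
  shows "(\<Sum>i\<in>V - {j}. h i - ((h i \<bullet> h j) / (norm (h j))\<^sup>2) *\<^sub>R h j) = 0"
proof -
  have s1: "(\<Sum>i\<in>V - {j}. h i) = - h j" using fin j hs by (simp add: sum_diff1)
  have "(\<Sum>i\<in>V - {j}. ((h i \<bullet> h j) / (norm (h j))\<^sup>2) *\<^sub>R h j)
      = ((\<Sum>i\<in>V - {j}. h i) \<bullet> h j / (norm (h j))\<^sup>2) *\<^sub>R h j"
    by (simp add: scaleR_sum_left[symmetric] sum_divide_distrib[symmetric] inner_sum_left)
  also have "\<dots> = - h j" using hj unfolding s1 by (simp add: power2_norm_eq_inner)
  finally show ?thesis using s1 by (simp add: sum_subtractf)
qed

lemma norm_sub_scale:
  fixes a b :: "'a::real_inner"
  shows "(norm (a - s *\<^sub>R b))\<^sup>2 = a \<bullet> a - 2 * s * (b \<bullet> a) + s\<^sup>2 * (b \<bullet> b)"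
proof -
  have "(norm (a - s *\<^sub>R b))\<^sup>2 = (a - s *\<^sub>R b) \<bullet> (a - s *\<^sub>R b)" by (rule power2_norm_eq_inner)
  also have "\<dots> = a \<bullet> a - s * (a \<bullet> b) - s * (b \<bullet> a) + s * s * (b \<bullet> b)"
    by (simp add: inner_diff_left inner_diff_right algebra_simps)
  finally show ?thesis by (simp add: inner_commute power2_eq_square)
qed

lemma facet_center:
  fixes hj c y :: "'a::euclidean_space"
  assumes hj: "hj \<noteq> 0" and l: "hj \<bullet> (c - y) = l"
  shows "(norm (c - (l / (norm hj)\<^sup>2) *\<^sub>R hj - y))\<^sup>2 = (norm (c - y))\<^sup>2 - l\<^sup>2 / (norm hj)\<^sup>2"
proof -
  have n: "norm hj > 0" using hj by simp
  have e: "c - (l / (norm hj)\<^sup>2) *\<^sub>R hj - y = (c - y) - (l / (norm hj)\<^sup>2) *\<^sub>R hj" by simp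
  have "(norm ((c - y) - (l / (norm hj)\<^sup>2) *\<^sub>R hj))\<^sup>2
      = (c - y) \<bullet> (c - y) - 2 * (l / (norm hj)\<^sup>2) * (hj \<bullet> (c - y)) + (l / (norm hj)\<^sup>2)\<^sup>2 * (hj \<bullet> hj)"
    by (rule norm_sub_scale)
  also have "\<dots> = (norm (c - y))\<^sup>2 - l\<^sup>2 / (norm hj)\<^sup>2"
    using n unfolding l by (simp add: power2_norm_eq_inner[symmetric] field_simps power2_eq_square)
  finally show ?thesis unfolding e .
qed

lemma hj_nz:
  assumes ec: "edgecond V h" and j: "j \<in> V" and w: "w \<in> V" "w \<noteq> j"
  shows "h j \<noteq> 0"
proof
  assume "h j = 0"
  moreover have "h j \<bullet> (w - j) = -1" using edgecondD[OF ec j w(1) j] w(2) by auto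
  ultimately show False by simp
qed

lemma main:
  fixes k :: nat
  assumes k1: "1 \<le> k"
  shows "\<And>(V::'a::euclidean_space set) h c R. finite V \<Longrightarrow> card V = n \<Longrightarrow> k < n \<Longrightarrow> edgecond V h \<Longrightarrow> sum h V = 0 \<Longrightarrow>
    (\<forall>F. F \<subseteq> V \<and> card F = k \<longrightarrow> (\<exists>y\<in>affine hull F. (norm (c - y))\<^sup>2 \<le> R)) \<Longrightarrow>
    real (n - 1) * real (n - k) / real k \<le> R * (\<Sum>v\<in>V. norm (h v))\<^sup>2"
proof (induction n)
  case 0
  then show ?case by simp
next
  case (Suc n)
  fix V :: "'a set" and h c R
  assume fin: "finite V" and cardV: "card V = Suc n" and kn: "k < Suc n" and ec: "edgecond V h"
    and hs: "sum h V = 0" and hyp: "\<forall>F. F \<subseteq> V \<and> card F = k \<longrightarrow> (\<exists>y\<in>affine hull F. (norm (c - y))\<^sup>2 \<le> R)"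
  define T where "T = (\<Sum>v\<in>V. norm (h v))"
  define lam where "lam j = h j \<bullet> (c - j) + 1" for j
  have Vne: "V \<noteq> {}" using cardV by auto
  have lsum: "sum lam V = 1" using lam_sum[OF fin Vne ec hs] by (simp add: lam_def)
  have other: "\<exists>w\<in>V. w \<noteq> j" if "j \<in> V" for j
  proof (rule ccontr)
    assume "\<not> ?thesis"
    then have "V \<subseteq> {j}" by auto
    then have "card V \<le> 1" using card_mono[of "{j}" V] by simp
    then show False using cardV kn k1 by simp
  qed
  have hnz: "\<forall>j\<in>V. h j \<noteq> 0" using other hj_nz[OF ec] by blast
  have cardD: "card (V - {j}) = n" if "j \<in> V" for j using cardV fin that by simp
  have lamy: "lam j = h j \<bullet> (c - y)" if "j \<in> V" "F \<subseteq> V - {j}" "y \<in> affine hull F" for j F y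
  proof -
    have "h j \<bullet> (y - j) = -1" by (rule lam_zero[OF ec that])
    moreover have "h j \<bullet> (c - j) = h j \<bullet> (c - y) + h j \<bullet> (y - j)" by (simp add: inner_diff_right)
    ultimately show ?thesis by (simp add: lam_def)
  qed
  show "real (Suc n - 1) * real (Suc n - k) / real k \<le> R * T\<^sup>2"
  proof (cases "k = n")
    case True
    have bnd: "\<bar>lam j\<bar> \<le> norm (h j) * sqrt R" if j: "j \<in> V" for j
    proof -
      obtain y where y: "y \<in> affine hull (V - {j})" "(norm (c - y))\<^sup>2 \<le> R"
        using hyp cardD[OF j] True by auto
      have "\<bar>lam j\<bar> = \<bar>h j \<bullet> (c - y)\<bar>" using lamy[OF j _ y(1)] by simp
      also have "\<dots> \<le> norm (h j) * norm (c - y)" by (rule Cauchy_Schwarz_ineq2)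
      also have "\<dots> \<le> norm (h j) * sqrt R" using y(2) by (intro mult_left_mono real_le_rsqrt) auto
      finally show ?thesis .
    qed
    obtain j0 where j0: "j0 \<in> V" using Vne by auto
    have Rnn: "R \<ge> 0"
    proof -
      obtain y where y: "y \<in> affine hull (V - {j0})" "(norm (c - y))\<^sup>2 \<le> R"
        using hyp cardD[OF j0] True by auto
      then show ?thesis by (meson order_trans zero_le_power2)
    qed
    have "1 = sum lam V" using lsum by simp
    also have "\<dots> \<le> (\<Sum>j\<in>V. \<bar>lam j\<bar>)" by (rule sum_mono) simp
    also have "\<dots> \<le> (\<Sum>j\<in>V. norm (h j) * sqrt R)" by (rule sum_mono) (rule bnd)
    also have "\<dots> = T * sqrt R" by (simp add: T_def sum_distrib_right)
    also have "\<dots> = sqrt R * T" by simp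
    finally have "1 \<le> sqrt R * T" .
    then have "1 \<le> (sqrt R * T)\<^sup>2" by (simp add: one_le_power)
    also have "(sqrt R * T)\<^sup>2 = R * T\<^sup>2" using Rnn by (simp add: power_mult_distrib)
    finally have "1 \<le> R * T\<^sup>2" .
    moreover have "real (Suc n - 1) * real (Suc n - k) / real k = 1" using True k1 by simp
    ultimately show ?thesis by simp
  next
    case False
    then have kn': "k < n" using kn by simp
    define \<alpha> where "\<alpha> = real (n - 1) * real (n - k) / real k"
    have alpos: "\<alpha> > 0" using kn' k1 by (simp add: \<alpha>_def)
    define TT where "TT j = (\<Sum>i\<in>V - {j}. norm (h i - ((h i \<bullet> h j) / (norm (h j))\<^sup>2) *\<^sub>R h j))" for j
    have IHj: "\<alpha> \<le> (R - (lam j)\<^sup>2 / (norm (h j))\<^sup>2) * (TT j)\<^sup>2" if j: "j \<in> V" for j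
    proof -
      have hj: "h j \<noteq> 0" using hnz j by auto
      show ?thesis unfolding \<alpha>_def TT_def
      proof (rule Suc.IH)
        show "finite (V - {j})" using fin by simp
        show "card (V - {j}) = n" by (rule cardD[OF j])
        show "k < n" by (rule kn')
        show "edgecond (V - {j}) (\<lambda>i. h i - ((h i \<bullet> h j) / (norm (h j))\<^sup>2) *\<^sub>R h j)"
          by (rule facet_edge[OF ec j])
        show "(\<Sum>i\<in>V - {j}. h i - ((h i \<bullet> h j) / (norm (h j))\<^sup>2) *\<^sub>R h j) = 0"
          by (rule facet_sum[OF fin j hs hj])
        show "\<forall>F. F \<subseteq> V - {j} \<and> card F = k \<longrightarrow>
          (\<exists>y\<in>affine hull F. (norm (c - (lam j / (norm (h j))\<^sup>2) *\<^sub>R h j - y))\<^sup>2 \<le> R - (lam j)\<^sup>2 / (norm (h j))\<^sup>2)"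
        proof (intro allI impI)
          fix F assume F: "F \<subseteq> V - {j} \<and> card F = k"
          then obtain y where y: "y \<in> affine hull F" "(norm (c - y))\<^sup>2 \<le> R" using hyp by blast
          have "lam j = h j \<bullet> (c - y)" using lamy[OF j _ y(1)] F by simp
          then have "(norm (c - (lam j / (norm (h j))\<^sup>2) *\<^sub>R h j - y))\<^sup>2 = (norm (c - y))\<^sup>2 - (lam j)\<^sup>2 / (norm (h j))\<^sup>2"
            using facet_center[OF hj] by simp
          then have "(norm (c - (lam j / (norm (h j))\<^sup>2) *\<^sub>R h j - y))\<^sup>2 \<le> R - (lam j)\<^sup>2 / (norm (h j))\<^sup>2"
            using y(2) by linarith
          then show "\<exists>y\<in>affine hull F. (norm (c - (lam j / (norm (h j))\<^sup>2) *\<^sub>R h j - y))\<^sup>2 \<le> R - (lam j)\<^sup>2 / (norm (h j))\<^sup>2"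
            using y(1) by blast
        qed
      qed
    qed
    have TTpos: "\<forall>j\<in>V. TT j > 0"
    proof
      fix j assume j: "j \<in> V"
      have "TT j \<ge> 0" unfolding TT_def by (intro sum_nonneg) simp
      moreover have "TT j \<noteq> 0" using IHj[OF j] alpos by auto
      ultimately show "TT j > 0" by simp
    qed
    have Rj: "\<forall>j\<in>V. (lam j)\<^sup>2 / (norm (h j))\<^sup>2 + \<alpha> / (TT j)\<^sup>2 \<le> R"
    proof
      fix j assume j: "j \<in> V"
      have "\<alpha> / (TT j)\<^sup>2 \<le> R - (lam j)\<^sup>2 / (norm (h j))\<^sup>2"
      proof -
        have "(TT j)\<^sup>2 > 0" using TTpos j by force
        then show ?thesis using IHj[OF j] by (simp add: pos_divide_le_eq)
      qed
      then show "(lam j)\<^sup>2 / (norm (h j))\<^sup>2 + \<alpha> / (TT j)\<^sup>2 \<le> R" by simp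
    qed
    have Sb: "(\<Sum>j\<in>V. norm (h j) * TT j)\<^sup>2 \<le> (\<Sum>j\<in>V. norm (h j)) ^ 4 * (real (Suc n) - 2) / real (Suc n)"
    proof -
      have "(\<Sum>j\<in>V. norm (h j) * TT j) = (\<Sum>j\<in>V. \<Sum>i\<in>V-{j}. norm (h j) * norm (h i - ((h i \<bullet> h j) / (norm (h j))\<^sup>2) *\<^sub>R h j))"
        by (simp add: TT_def sum_distrib_left)
      then show ?thesis using pairs[OF fin cardV _ hnz hs] kn k1 by simp
    qed
    have comb: "1 + \<alpha> * real (Suc n) / (real (Suc n) - 2) \<le> R * T\<^sup>2"
      unfolding T_def
      by (rule combine[OF fin cardV _ _ TTpos lsum Rj Sb]) (use kn' k1 hnz alpos in auto)
    have "real (Suc n - 1) * real (Suc n - k) / real k = 1 + \<alpha> * real (Suc n) / (real (Suc n) - 2)"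
    proof -
      have n1: "real (n - 1) = real n - 1" using kn' k1 by (simp add: of_nat_diff)
      have n2: "real (n - k) = real n - real k" using kn' by (simp add: of_nat_diff)
      have n3: "real (Suc n - k) = real n + 1 - real k" using kn' by (simp add: of_nat_diff)
      have kp: "real k > 0" using k1 by simp
      have np: "real n - 1 > 0" using kn' k1 by simp
      show ?thesis unfolding \<alpha>_def n1 n2 n3 using kp np
        by (simp add: field_simps)
    qed
    then show ?thesis using comb by simp
  qed
qed

theorem theorem5p2:
  fixes V :: "'a::euclidean_space set" and n k :: nat and c :: 'a and \<rho> :: real
  assumes "n \<ge> 2" and "DIM('a) = n - 1"
    and "finite V" and "card V = n" and "\<not> affine_dependent V"
    and "1 \<le> k" and "k \<le> n"
    and "\<forall>F. F \<subseteq> V \<and> card F = k \<longrightarrow> cball c \<rho> \<inter> affine hull F \<noteq> {}"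
  shows "\<rho> \<ge> sqrt (real (n - 1) * real (n - k) / real k) * inradius (convex hull V)"
proof -
  have Vne: "V \<noteq> {}" using assms(1,4) by auto
  then obtain v0 where v0: "v0 \<in> V" by auto
  obtain h where ec: "edgecond V h" and hs: "sum h V = 0"
    using h_exists[OF assms(3,5) v0] by blast
  define T where "T = (\<Sum>v\<in>V. norm (h v))"
  obtain F0 where F0: "F0 \<subseteq> V" "card F0 = k" using obtain_subset_with_card_n[of k V] assms(4,7) by auto
  have rho_nn: "\<rho> \<ge> 0"
  proof -
    obtain y where "y \<in> cball c \<rho>" using assms(8) F0 by blast
    then have "dist c y \<le> \<rho>" by simp
    then show ?thesis using zero_le_dist[of c y] by linarith
  qed
  show ?thesis
  proof (cases "k = n")
    case True
    then show ?thesis using rho_nn by simp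
  next
    case False
    then have kn: "k < n" using assms(7) by simp
    have hyp: "\<forall>F. F \<subseteq> V \<and> card F = k \<longrightarrow> (\<exists>y\<in>affine hull F. (norm (c - y))\<^sup>2 \<le> \<rho>\<^sup>2)"
    proof (intro allI impI)
      fix F assume "F \<subseteq> V \<and> card F = k"
      then obtain y where y: "y \<in> cball c \<rho>" "y \<in> affine hull F" using assms(8) by blast
      then have "norm (c - y) \<le> \<rho>" by (simp add: dist_norm)
      then have "(norm (c - y))\<^sup>2 \<le> \<rho>\<^sup>2" by (intro power_mono) auto
      then show "\<exists>y\<in>affine hull F. (norm (c - y))\<^sup>2 \<le> \<rho>\<^sup>2" using y(2) by blast
    qed
    have al: "real (n - 1) * real (n - k) / real k \<le> \<rho>\<^sup>2 * T\<^sup>2"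
      unfolding T_def by (rule main[OF assms(6) assms(3) assms(4) kn ec hs hyp])
    have hnz: "h j \<noteq> 0" if j: "j \<in> V" for j
    proof -
      have "\<exists>w\<in>V. w \<noteq> j"
      proof (rule ccontr)
        assume "\<not> ?thesis"
        then have "V \<subseteq> {j}" by auto
        then have "card V \<le> 1" using card_mono[of "{j}" V] by simp
        then show False using assms(1,4) by simp
      qed
      then show ?thesis using hj_nz[OF ec j] by blast
    qed
    have Tpos: "T > 0" unfolding T_def using assms(3) Vne hnz by (intro sum_pos) auto
    define \<alpha> where "\<alpha> = real (n - 1) * real (n - k) / real k"
    have sq: "sqrt \<alpha> \<le> \<rho> * T"
    proof -
      have "sqrt \<alpha> \<le> sqrt ((\<rho> * T)\<^sup>2)" using al unfolding \<alpha>_def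
        by (intro real_sqrt_le_mono) (simp add: power_mult_distrib)
      also have "\<dots> = \<rho> * T" using rho_nn Tpos by simp
      finally show ?thesis .
    qed
    have inr: "inradius (convex hull V) \<le> 1 / T"
      unfolding inradius_def
    proof (rule cSup_least)
      show "{r. 0 \<le> r \<and> (\<exists>c. cball c r \<subseteq> convex hull V)} \<noteq> {}"
      proof -
        have "cball v0 0 \<subseteq> convex hull V" using v0 by (simp add: hull_inc)
        then show ?thesis by blast
      qed
    next
      fix r assume "r \<in> {r. 0 \<le> r \<and> (\<exists>c. cball c r \<subseteq> convex hull V)}"
      then obtain x where r: "0 \<le> r" "cball x r \<subseteq> convex hull V" by blast
      have "r * T \<le> 1" unfolding T_def by (rule ball_bound[OF assms(3) Vne ec hs r(2) r(1)])
      then show "r \<le> 1 / T" using Tpos by (simp add: pos_le_divide_eq)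
    qed
    have "sqrt \<alpha> * inradius (convex hull V) \<le> sqrt \<alpha> * (1 / T)"
      by (rule mult_left_mono[OF inr]) (simp add: \<alpha>_def)
    also have "\<dots> \<le> \<rho>" using sq Tpos by (simp add: pos_divide_le_eq)
    finally show ?thesis unfolding \<alpha>_def .
  qed
qed

end
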